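(* Let $n\ge 1$ and let $X=\mathrm{P}_n$ be the path graph on $n$ vertices. Then $|\mathrm{Fix}(\mathbf{F}^\uparrow)|=2F_{3n-1}$, where $F_m$ is the $m$-th Fibonacci number ($F_0=0$, $F_1=1$, $F_m=F_{m-1}+F_{m-2}$).
   Context: For a finite simple graph $X$ with vertices $1,\dots,n$, $d(v)$ is the degree of $v$ and $n[v]$ the closed neighborhood of $v$. An extended vertex state is $s_v=(x_v,k_v)\in\{0,1\}\times\{1,\dots,d(v)+1\}$; $\mathcal{S}$ is the product of these sets. Let $\sigma(x[v])=|\{u\in n[v]:x_u=1\}|$. The increasing vertex function maps $(x_v,k_v)$ to $(x_v',k_v')$ with $x_v'=1$ iff $\sigma(x[v])\ge k_v$ (else $0$), and $k_v'=k_v+1$ if $x_v=0$ and $\sigma(x[v])\ge k_v$, else $k_v'=k_v$. $\mathbf{F}^\uparrow:\mathcal{S}\to\mathcal{S}$ applies this vertex function at all vertices simultaneously, and $\mathrm{Fix}(\mathbf{F}^\uparrow)$ is its set of fixed points (equivalently: states with, for every $v$, either $x_v=0$ and $\sigma(x[v])<k_v$, or $x_v=1$ and $\sigma(x[v])\ge k_v$). *)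

theory Defs
  imports Main "HOL-Library.FuncSet" "HOL-Number_Theory.Fib"
begin

definition nbrs :: "'a set \<Rightarrow> ('a \<Rightarrow> 'a \<Rightarrow> bool) \<Rightarrow> 'a \<Rightarrow> 'a set" where
  "nbrs V E v = {u \<in> V. E v u}"

definition deg :: "'a set \<Rightarrow> ('a \<Rightarrow> 'a \<Rightarrow> bool) \<Rightarrow> 'a \<Rightarrow> nat" where
  "deg V E v = card (nbrs V E v)"

definition closed_nbhd :: "'a set \<Rightarrow> ('a \<Rightarrow> 'a \<Rightarrow> bool) \<Rightarrow> 'a \<Rightarrow> 'a set" where
  "closed_nbhd V E v = insert v (nbrs V E v)"

definition states :: "'a set \<Rightarrow> ('a \<Rightarrow> 'a \<Rightarrow> bool) \<Rightarrow> ('a \<Rightarrow> nat \<times> nat) set" where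
  "states V E = (\<Pi>\<^sub>E v\<in>V. {0,1} \<times> {1..deg V E v + 1})"

definition sigma :: "'a set \<Rightarrow> ('a \<Rightarrow> 'a \<Rightarrow> bool) \<Rightarrow> ('a \<Rightarrow> nat \<times> nat) \<Rightarrow> 'a \<Rightarrow> nat" where
  "sigma V E s v = card {u \<in> closed_nbhd V E v. fst (s u) = 1}"

definition inc_vertex_fun :: "'a set \<Rightarrow> ('a \<Rightarrow> 'a \<Rightarrow> bool) \<Rightarrow> ('a \<Rightarrow> nat \<times> nat) \<Rightarrow> 'a \<Rightarrow> nat \<times> nat" where
  "inc_vertex_fun V E s v =
     (let x = fst (s v); k = snd (s v); sg = sigma V E s v in
       ((if sg \<ge> k then 1 else 0),
        (if x = 0 \<and> sg \<ge> k then k + 1 else k)))"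

definition F_up :: "'a set \<Rightarrow> ('a \<Rightarrow> 'a \<Rightarrow> bool) \<Rightarrow> ('a \<Rightarrow> nat \<times> nat) \<Rightarrow> ('a \<Rightarrow> nat \<times> nat)" where
  "F_up V E s = (\<lambda>v. if v \<in> V then inc_vertex_fun V E s v else undefined)"

definition Fix_F_up :: "'a set \<Rightarrow> ('a \<Rightarrow> 'a \<Rightarrow> bool) \<Rightarrow> ('a \<Rightarrow> nat \<times> nat) set" where
  "Fix_F_up V E = {s \<in> states V E. F_up V E s = s}"

definition path_V :: "nat \<Rightarrow> nat set" where "path_V n = {1..n}"
definition path_E :: "nat \<Rightarrow> nat \<Rightarrow> bool" where "path_E u v = (u = v + 1 \<or> v = u + 1)"

end

theory Submission
  imports Defs
begin

definition dg :: "nat option \<Rightarrow> nat option \<Rightarrow> nat" where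
  "dg p q = (if p = None then 0 else 1) + (if q = None then 0 else 1)"
definition sg :: "nat option \<Rightarrow> nat \<Rightarrow> nat option \<Rightarrow> nat" where
  "sg p x q = (if x = 1 then 1 else 0) + (if p = Some 1 then 1 else 0) + (if q = Some 1 then 1 else 0)"
definition loc :: "nat option \<Rightarrow> nat \<times> nat \<Rightarrow> nat option \<Rightarrow> bool" where
  "loc p a q = (fst a \<in> {0,1} \<and> snd a \<in> {1..dg p q + 1} \<and> fst a = (if snd a \<le> sg p (fst a) q then 1 else 0))"

fun okL :: "nat option \<Rightarrow> (nat \<times> nat) list \<Rightarrow> bool" where
  "okL p [] = True"
| "okL p [a] = loc p a None"
| "okL p (a # b # r) = (loc p a (Some (fst b)) \<and> okL (Some (fst a)) (b # r))"

definition S :: "nat option \<Rightarrow> nat \<Rightarrow> nat \<Rightarrow> (nat \<times> nat) list set" where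
  "S p x m = {xs. length xs = Suc m \<and> fst (hd xs) = x \<and> okL p xs}"

definition K :: "nat option \<Rightarrow> nat \<Rightarrow> nat option \<Rightarrow> nat set" where
  "K p x q = {k. loc p (x,k) q}"

lemma K_fin: "finite (K p x q)"
  by (rule finite_subset[of _ "{1..dg p q + 1}"]) (auto simp: K_def loc_def)

lemma K_card: "x \<in> {0,1} \<Longrightarrow> card (K p x q) =
   (if x = 1 then sg p x q else dg p q + 1 - sg p x q)"
proof -
  assume x: "x \<in> {0,1}"
  have b: "sg p x q \<le> dg p q + (if x = 1 then 1 else 0)"
    by (auto simp: sg_def dg_def)
  show ?thesis
  proof (cases "x = 1")
    case True
    then have "K p x q = {1..sg p x q}" using b by (auto simp: K_def loc_def)
    then show ?thesis using True by simp
  next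
    case False
    then have x0: "x = 0" using x by auto
    then have "K p x q = {sg p x q + 1..dg p q + 1}" using b by (auto simp: K_def loc_def)
    then show ?thesis using x0 by simp
  qed
qed

lemma okL_hd: "okL p (a # r) \<Longrightarrow> fst a \<in> {0,1}"
  by (cases r) (auto simp: loc_def)

lemma S0: "S p x 0 = (\<lambda>k. [(x,k)]) ` K p x None"
  by (auto simp: S_def K_def length_Suc_conv)

lemma SSuc: "S p x (Suc m) = (\<Union>y\<in>{0,1}. (\<lambda>(k,ys). (x,k) # ys) ` (K p x (Some y) \<times> S (Some x) y m))"
proof (rule set_eqI, rule iffI)
  fix xs assume "xs \<in> S p x (Suc m)"
  then obtain k b r where xs: "xs = (x,k) # b # r" and l: "length r = m"
    and ok: "okL p ((x,k) # b # r)"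
    unfolding S_def by (auto simp: length_Suc_conv)
  have y: "fst b \<in> {0,1}" using ok okL_hd[of "Some x" b r] by simp
  have "xs \<in> (\<lambda>(k,ys). (x,k) # ys) ` (K p x (Some (fst b)) \<times> S (Some x) (fst b) m)"
    using ok l unfolding xs by (auto simp: K_def S_def)
  then show "xs \<in> (\<Union>y\<in>{0,1}. (\<lambda>(k,ys). (x,k) # ys) ` (K p x (Some y) \<times> S (Some x) y m))"
    using y by blast
next
  fix xs assume "xs \<in> (\<Union>y\<in>{0,1}. (\<lambda>(k,ys). (x,k) # ys) ` (K p x (Some y) \<times> S (Some x) y m))"
  then obtain y k ys where xs: "xs = (x,k) # ys" and k: "k \<in> K p x (Some y)"
    and ys: "ys \<in> S (Some x) y m" by auto
  from ys obtain b r where ys': "ys = b # r" "fst b = y" "length r = m" "okL (Some x) (b # r)"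
    unfolding S_def by (auto simp: length_Suc_conv)
  show "xs \<in> S p x (Suc m)" using k ys' xs by (auto simp: S_def K_def)
qed

lemma S_fin: "finite (S p x m)"
proof (induction m arbitrary: p x)
  case 0 then show ?case by (simp add: S0 K_fin)
next
  case (Suc m) then show ?case by (simp add: SSuc K_fin)
qed

lemma S_card_Suc: "card (S p x (Suc m)) =
  (\<Sum>y\<in>{0,1}. card (K p x (Some y)) * card (S (Some x) y m))"
proof -
  have "card (S p x (Suc m)) = (\<Sum>y\<in>{0,1}. card ((\<lambda>(k,ys). (x,k) # ys) ` (K p x (Some y) \<times> S (Some x) y m)))"
    unfolding SSuc
    by (rule card_UN_disjoint) (auto simp: K_fin S_fin, auto simp: S_def)
  also have "\<dots> = (\<Sum>y\<in>{0,1}. card (K p x (Some y) \<times> S (Some x) y m))"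
    by (rule sum.cong[OF refl], rule card_image) (auto simp: inj_on_def)
  finally show ?thesis by (simp add: card_cartesian_product)
qed

lemma S_card_0: "x \<in> {0,1} \<Longrightarrow> card (S p x 0) = card (K p x None)"
  by (simp add: S0 card_image inj_on_def)


lemma fib3: "fib (n+3) = 2*fib(n+1)+fib n" by (simp add: eval_nat_numeral)
lemma fib4: "fib (n+4) = 3*fib(n+1)+2*fib n" by (simp add: eval_nat_numeral)

lemma S_Some: "a \<in> {0,1} \<Longrightarrow> x \<in> {0,1} \<Longrightarrow>
  card (S (Some a) x m) = (if a = x then fib (3*m+3) else fib (3*m+2))"
proof (induction m arbitrary: a x)
  case 0
  then show ?case by (auto simp: S_card_0 K_card sg_def dg_def numeral_3_eq_3)
next
  case (Suc m)
  define n where "n = 3*m+2"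
  have e: "3*Suc m+3 = n+4" "3*Suc m+2 = n+3" "3*m+3 = n+1" "3*m+2 = n" by (simp_all add: n_def)
  have IH': "\<And>a x. a\<in>{0,1} \<Longrightarrow> x\<in>{0,1} \<Longrightarrow> card (S (Some a) x m) = (if a=x then fib(n+1) else fib n)"
    using Suc.IH unfolding e by blast
  show ?case unfolding e(1,2) using Suc.prems
    by (auto simp: S_card_Suc IH' K_card sg_def dg_def fib3 fib4 simp del: fib.simps)
qed

lemma S_None: assumes "x \<in> {0,1}" shows "card (S None x m) = fib (3*m+2)"
proof (cases m)
  case 0
  then show ?thesis using \<open>x \<in> {0,1}\<close> by (auto simp: S_card_0 K_card sg_def dg_def)
next
  case (Suc k)
  define n where "n = 3*k+2"
  have e: "3*Suc k+2 = n+3" "3*k+3 = n+1" "3*k+2 = n" by (simp_all add: n_def)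
  have IH': "\<And>a x. a\<in>{0,1} \<Longrightarrow> x\<in>{0,1} \<Longrightarrow> card (S (Some a) x k) = (if a=x then fib(n+1) else fib n)"
    using S_Some[of _ _ k] unfolding e by blast
  show ?thesis using \<open>x \<in> {0,1}\<close> unfolding Suc e(1)
    by (auto simp: S_card_Suc IH' K_card sg_def dg_def fib3 simp del: fib.simps)
qed


lemma L_card: assumes "n \<ge> 1"
  shows "card {xs. length xs = n \<and> okL None xs} = 2 * fib (3*n - 1)"
proof -
  have "{xs. length xs = n \<and> okL None xs} = S None 0 (n-1) \<union> S None 1 (n-1)"
  proof (rule set_eqI, rule iffI)
    fix xs assume a: "xs \<in> {xs. length xs = n \<and> okL None xs}"
    then obtain b r where xs: "xs = b # r" using assms by (cases xs) auto
    then have "fst b \<in> {0,1}" using a okL_hd[of None b r] by simp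
    then show "xs \<in> S None 0 (n-1) \<union> S None 1 (n-1)" using a xs by (auto simp: S_def)
  qed (use assms in \<open>auto simp: S_def\<close>)
  moreover have "S None 0 (n-1) \<inter> S None 1 (n-1) = {}" by (auto simp: S_def)
  ultimately have "card {xs. length xs = n \<and> okL None xs} = card (S None 0 (n-1)) + card (S None 1 (n-1))"
    by (simp add: card_Un_disjoint S_fin)
  also have "\<dots> = 2 * fib (3*(n-1)+2)" by (simp add: S_None)
  also have "3*(n-1)+2 = 3*n-1" using assms by simp
  finally show ?thesis .
qed

lemma okL_idx: "okL p xs = (\<forall>i<length xs. loc (if i=0 then p else Some (fst (xs!(i-1)))) (xs!i)
    (if Suc i < length xs then Some (fst (xs!Suc i)) else None))"
proof (induction p xs rule: okL.induct)
  case (3 p a b r)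
  show ?case
    unfolding okL.simps 3 length_Cons All_less_Suc2
    by (simp add: nth_Cons')
qed auto


lemma nbrs_path: "v \<in> {1..n} \<Longrightarrow> nbrs (path_V n) path_E v =
   (if v = 1 then {} else {v-1}) \<union> (if v < n then {v+1} else {})"
  by (auto simp: nbrs_def path_V_def path_E_def)

lemma deg_path: "v \<in> {1..n} \<Longrightarrow> deg (path_V n) path_E v =
   dg (if v = 1 then None else Some a) (if v < n then Some b else None)"
  by (auto simp: deg_def nbrs_path dg_def)

lemma sigma_path: assumes v: "v \<in> {1..n}"
  shows "sigma (path_V n) path_E s v =
   sg (if v = 1 then None else Some (fst (s (v-1)))) (fst (s v)) (if v < n then Some (fst (s (v+1))) else None)"
proof -
  have "{u \<in> closed_nbhd (path_V n) path_E v. fst (s u) = 1} =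
     (if fst (s v) = 1 then {v} else {}) \<union> (if v \<noteq> 1 \<and> fst (s (v-1)) = 1 then {v-1} else {})
       \<union> (if v < n \<and> fst (s (v+1)) = 1 then {v+1} else {})"
    using v by (auto simp: closed_nbhd_def nbrs_path)
  then show ?thesis using v by (auto simp: sigma_def sg_def)
qed

lemma vertex_char: assumes v: "v \<in> {1..n}"
  shows "(s v \<in> {0,1} \<times> {1..deg (path_V n) path_E v + 1} \<and> inc_vertex_fun (path_V n) path_E s v = s v) =
    loc (if v = 1 then None else Some (fst (s (v-1)))) (s v) (if v < n then Some (fst (s (v+1))) else None)"
proof -
  have d: "deg (path_V n) path_E v = dg (if v = 1 then None else Some (fst (s (v-1)))) (if v < n then Some (fst (s (v+1))) else None)"
    by (rule deg_path[OF v])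
  show ?thesis unfolding d
    by (cases "s v") (auto simp: sigma_path[OF v] inc_vertex_fun_def loc_def Let_def)
qed

lemma t1: "v \<in> {1..n} \<Longrightarrow> F_up (path_V n) path_E s v = inc_vertex_fun (path_V n) path_E s v"
  unfolding F_up_def path_V_def[symmetric] by simp
lemma t2: "v \<notin> {1..n} \<Longrightarrow> F_up (path_V n) path_E s v = undefined"
  unfolding F_up_def path_V_def[symmetric] by simp
lemma F_up_ext: assumes "s \<in> extensional {1..n}"
  shows "F_up (path_V n) path_E s = s \<longleftrightarrow> (\<forall>v\<in>{1..n}. inc_vertex_fun (path_V n) path_E s v = s v)"
proof
  assume "F_up (path_V n) path_E s = s"
  then show "\<forall>v\<in>{1..n}. inc_vertex_fun (path_V n) path_E s v = s v" using t1 by metis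
next
  assume h: "\<forall>v\<in>{1..n}. inc_vertex_fun (path_V n) path_E s v = s v"
  show "F_up (path_V n) path_E s = s"
  proof
    fix v show "F_up (path_V n) path_E s v = s v"
      using h t1[of v n s] t2[of v n s] assms extensional_arb[of s "{1..n}" v] by (cases "v \<in> {1..n}") simp_all
  qed
qed
lemma Fix_char1: "s \<in> Fix_F_up (path_V n) path_E \<longleftrightarrow> s \<in> extensional {1..n} \<and>
     (\<forall>v\<in>{1..n}. s v \<in> {0,1} \<times> {1..deg (path_V n) path_E v + 1} \<and> inc_vertex_fun (path_V n) path_E s v = s v)"
proof
  assume a: "s \<in> Fix_F_up (path_V n) path_E"
  then have e: "s \<in> extensional {1..n}" and m: "\<forall>v\<in>{1..n}. s v \<in> {0,1} \<times> {1..deg (path_V n) path_E v + 1}"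
    and f: "F_up (path_V n) path_E s = s"
    unfolding Fix_F_up_def states_def PiE_iff path_V_def by auto
  show "s \<in> extensional {1..n} \<and>
     (\<forall>v\<in>{1..n}. s v \<in> {0,1} \<times> {1..deg (path_V n) path_E v + 1} \<and> inc_vertex_fun (path_V n) path_E s v = s v)"
    using e m f F_up_ext[OF e] by simp
next
  assume a: "s \<in> extensional {1..n} \<and>
     (\<forall>v\<in>{1..n}. s v \<in> {0,1} \<times> {1..deg (path_V n) path_E v + 1} \<and> inc_vertex_fun (path_V n) path_E s v = s v)"
  then have e: "s \<in> extensional {1..n}" by simp
  have f: "F_up (path_V n) path_E s = s" using a F_up_ext[OF e] by simp
  show "s \<in> Fix_F_up (path_V n) path_E"
    using a f unfolding Fix_F_up_def states_def PiE_iff path_V_def by simp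
qed

lemma okL_map: "(\<forall>v\<in>{1..n}. loc (if v = 1 then None else Some (fst (s (v-1)))) (s v) (if v < n then Some (fst (s (v+1))) else None))
     \<longleftrightarrow> okL None (map s [1..<Suc n])"
proof -
  have l: "length (map s [1..<Suc n]) = n" by (simp del: upt_Suc)
  have nth: "\<And>i. i < n \<Longrightarrow> map s [1..<Suc n] ! i = s (Suc i)" by (simp add: nth_map_upt del: upt_Suc)
  have "okL None (map s [1..<Suc n]) \<longleftrightarrow>
    (\<forall>i<n. loc (if i = 0 then None else Some (fst (s i))) (s (Suc i)) (if Suc i < n then Some (fst (s (Suc (Suc i)))) else None))"
    unfolding okL_idx l
  proof (intro iffI allI impI)
    fix i assume h: "\<forall>i<n. loc (if i = 0 then None else Some (fst (map s [1..<Suc n] ! (i - 1)))) (map s [1..<Suc n] ! i)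
              (if Suc i < n then Some (fst (map s [1..<Suc n] ! Suc i)) else None)" and i: "i < n"
    show "loc (if i = 0 then None else Some (fst (s i))) (s (Suc i)) (if Suc i < n then Some (fst (s (Suc (Suc i)))) else None)"
      using h[rule_format, OF i] i nth[of i] nth[of "i-1"] nth[of "Suc i"]
      by (cases "i = 0"; cases "Suc i < n") simp_all
  next
    fix i assume h: "\<forall>i<n. loc (if i = 0 then None else Some (fst (s i))) (s (Suc i)) (if Suc i < n then Some (fst (s (Suc (Suc i)))) else None)" and i: "i < n"
    show "loc (if i = 0 then None else Some (fst (map s [1..<Suc n] ! (i - 1)))) (map s [1..<Suc n] ! i)
              (if Suc i < n then Some (fst (map s [1..<Suc n] ! Suc i)) else None)"
      using h[rule_format, OF i] i nth[of i] nth[of "i-1"] nth[of "Suc i"]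
      by (cases "i = 0"; cases "Suc i < n") simp_all
  qed
  also have "\<dots> \<longleftrightarrow> (\<forall>v\<in>{1..n}. loc (if v = 1 then None else Some (fst (s (v-1)))) (s v) (if v < n then Some (fst (s (v+1))) else None))"
  proof (intro iffI ballI allI impI)
    fix v assume h: "\<forall>i<n. loc (if i = 0 then None else Some (fst (s i))) (s (Suc i)) (if Suc i < n then Some (fst (s (Suc (Suc i)))) else None)"
      and v: "v \<in> {1..n}"
    then obtain i where vi: "v = Suc i" "i < n" by (cases v) auto
    show "loc (if v = 1 then None else Some (fst (s (v-1)))) (s v) (if v < n then Some (fst (s (v+1))) else None)"
      using h[rule_format, OF vi(2)] unfolding vi(1) by (cases "i = 0"; cases "Suc i < n") simp_all
  next
    fix i assume h: "\<forall>v\<in>{1..n}. loc (if v = 1 then None else Some (fst (s (v-1)))) (s v) (if v < n then Some (fst (s (v+1))) else None)"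
      and i: "i < n"
    have "Suc i \<in> {1..n}" using i by simp
    show "loc (if i = 0 then None else Some (fst (s i))) (s (Suc i)) (if Suc i < n then Some (fst (s (Suc (Suc i)))) else None)"
      using h[rule_format, OF \<open>Suc i \<in> {1..n}\<close>] by (cases "i = 0"; cases "Suc i < n") simp_all
  qed
  finally show ?thesis by simp
qed

lemma Fix_char: "s \<in> Fix_F_up (path_V n) path_E \<longleftrightarrow>
   s \<in> extensional {1..n} \<and> okL None (map s [1..<Suc n])"
proof -
  have "(\<forall>v\<in>{1..n}. s v \<in> {0,1} \<times> {1..deg (path_V n) path_E v + 1} \<and> inc_vertex_fun (path_V n) path_E s v = s v)
    \<longleftrightarrow> (\<forall>v\<in>{1..n}. loc (if v = 1 then None else Some (fst (s (v-1)))) (s v) (if v < n then Some (fst (s (v+1))) else None))"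
    by (rule ball_cong[OF refl], rule vertex_char)
  then show ?thesis unfolding Fix_char1 okL_map by simp
qed


theorem proposition4p3:
  fixes n :: nat
  assumes "n \<ge> 1"
  shows "card (Fix_F_up (path_V n) path_E) = 2 * fib (3 * n - 1)"
proof -
  let ?f = "\<lambda>s. map s [1..<Suc n]"
  have nth: "\<And>s i. i < n \<Longrightarrow> ?f s ! i = s (Suc i)" by (simp add: nth_map_upt del: upt_Suc)
  have len: "\<And>s. length (?f s) = n" by (simp del: upt_Suc)
  have inj: "inj_on ?f (Fix_F_up (path_V n) path_E)"
  proof (rule inj_onI)
    fix s t assume s: "s \<in> Fix_F_up (path_V n) path_E" and t: "t \<in> Fix_F_up (path_V n) path_E"
      and e: "?f s = ?f t"
    show "s = t"
    proof (rule extensionalityI)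
      show "s \<in> extensional {1..n}" "t \<in> extensional {1..n}" using s t Fix_char by blast+
      fix v assume v: "v \<in> {1..n}"
      then obtain i where vi: "v = Suc i" "i < n" by (cases v) auto
      show "s v = t v" using nth[OF vi(2), of s] nth[OF vi(2), of t] e vi(1) by metis
    qed
  qed
  have img: "?f ` Fix_F_up (path_V n) path_E = {xs. length xs = n \<and> okL None xs}"
  proof (rule set_eqI, rule iffI)
    fix xs assume "xs \<in> ?f ` Fix_F_up (path_V n) path_E"
    then show "xs \<in> {xs. length xs = n \<and> okL None xs}" using Fix_char len by auto
  next
    fix xs assume xs: "xs \<in> {xs. length xs = n \<and> okL None xs}"
    define s where "s = (\<lambda>v. if v \<in> {1..n} then xs ! (v - 1) else undefined)"
    have fs: "?f s = xs"
    proof (rule nth_equalityI)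
      show "length (?f s) = length xs" using len xs by simp
      fix i assume "i < length (?f s)"
      then have i: "i < n" using len by simp
      show "?f s ! i = xs ! i" using nth[OF i, of s] i by (simp add: s_def)
    qed
    have "s \<in> extensional {1..n}" by (simp add: s_def extensional_def)
    then have "s \<in> Fix_F_up (path_V n) path_E" using Fix_char fs xs by simp
    then show "xs \<in> ?f ` Fix_F_up (path_V n) path_E" using fs by force
  qed
  have "card (Fix_F_up (path_V n) path_E) = card (?f ` Fix_F_up (path_V n) path_E)"
    using card_image[OF inj] by simp
  also have "\<dots> = 2 * fib (3 * n - 1)" unfolding img by (rule L_card[OF assms])
  finally show ?thesis .
qed

end
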